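(* Let $G=(V,E)$ be a directed graph with edge weights $\omega:E\to\mathbb{R}^{\geq 0}$, let $s,t\in V$ and $k\geq 1$. Let $G'$ be obtained from $G$ by replacing every edge $e$ by $k$ parallel copies $e_1,\dots,e_k$, each of weight $\omega(e)$. Consider solutions consisting of $k$ pairwise edge-disjoint $s\leadsto t$ paths $\mathcal{F}=\{F_1,\dots,F_k\}$ in $G'$ and one $t\leadsto s$ path $B$ in $G'$, with cost equal to the total weight of the set of edges of $G'$ used by $F_1,\dots,F_k,B$. Then there exists an optimum (minimum cost) solution $(\mathcal{F},B)$ that is reverse-compatible.
   Context: For an $s\leadsto t$ path $F$ and a $t\leadsto s$ path $B$, let $P_1,\dots,P_d$ be the maximal sub-paths shared by $F$ and $B$, indexed so that $P_j$ is the $j$-th such sub-path encountered while traversing $F$. The pair $(F,B)$ is path-reverse-compatible if for every $j\in[d]$, $P_j$ is the $(d-j+1)$-th of these sub-paths encountered while traversing $B$. A pair $(\mathcal{F},B)$ with $\mathcal{F}=\{F_1,\dots,F_r\}$ a set of $s\leadsto t$ paths is reverse-compatible if $(F_i,B)$ is path-reverse-compatible for every $i$. (This edge-copy setting models the 2-SCSS-$(k,1)$ problem, in which one seeks $k$ paths $s\leadsto t$ and one path $t\leadsto s$ minimizing $\sum_e\omega(e)\max\{\#\{i: e\in F_i\},\ \#\{B\ni e\}\}$.) *)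

theory Defs
  imports "Graph_Theory.Digraph" "Graph_Theory.Arc_Walk" "HOL-Library.Sublist"
begin

definition copy_graph :: "('a,'b) pre_digraph \<Rightarrow> nat \<Rightarrow> ('a, 'b \<times> nat) pre_digraph" where
  "copy_graph G k = \<lparr> verts = verts G, arcs = arcs G \<times> {0..<k},
      tail = (\<lambda>a. tail G (fst a)), head = (\<lambda>a. head G (fst a)) \<rparr>"

definition is_solution ::
  "('a,'b) pre_digraph \<Rightarrow> nat \<Rightarrow> 'a \<Rightarrow> 'a \<Rightarrow> (nat \<Rightarrow> ('b \<times> nat) list) \<Rightarrow> ('b \<times> nat) list \<Rightarrow> bool" where
  "is_solution G k s t Fs B \<longleftrightarrow>
     (\<forall>i<k. pre_digraph.apath (copy_graph G k) s (Fs i) t) \<and>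
     (\<forall>i<k. \<forall>j<k. i \<noteq> j \<longrightarrow> set (Fs i) \<inter> set (Fs j) = {}) \<and>
     pre_digraph.apath (copy_graph G k) t B s"

definition sol_cost ::
  "('b \<Rightarrow> real) \<Rightarrow> nat \<Rightarrow> (nat \<Rightarrow> ('b \<times> nat) list) \<Rightarrow> ('b \<times> nat) list \<Rightarrow> real" where
  "sol_cost \<omega> k Fs B = (\<Sum>a \<in> (\<Union>i<k. set (Fs i)) \<union> set B. \<omega> (fst a))"

definition shared_subpaths :: "'e list \<Rightarrow> 'e list \<Rightarrow> 'e list set" where
  "shared_subpaths F B = {P. P \<noteq> [] \<and> sublist P F \<and> sublist P B}"

definition max_shared_subpaths :: "'e list \<Rightarrow> 'e list \<Rightarrow> 'e list set" where
  "max_shared_subpaths F B =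
     {P \<in> shared_subpaths F B. \<forall>Q \<in> shared_subpaths F B. sublist P Q \<longrightarrow> Q = P}"

definition occurs_before :: "'e list \<Rightarrow> 'e list \<Rightarrow> 'e list \<Rightarrow> bool" where
  "occurs_before xs P Q \<longleftrightarrow> (\<exists>u v w. xs = u @ P @ v @ Q @ w)"

definition order_along :: "'e list \<Rightarrow> 'e list set \<Rightarrow> 'e list list" where
  "order_along xs S = (THE ds. distinct ds \<and> set ds = S \<and> sorted_wrt (occurs_before xs) ds)"

text \<open>(F,B) is path-reverse-compatible: the j-th maximal shared sub-path along F is the
  (d-j+1)-th along B, i.e. the order along F is the reverse of the order along B.\<close>
definition path_rev_compatible :: "'e list \<Rightarrow> 'e list \<Rightarrow> bool" where
  "path_rev_compatible F B \<longleftrightarrow>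
     (let S = max_shared_subpaths F B; d = card S in
      \<forall>j<d. order_along F S ! j = order_along B S ! (d - j - 1))"

definition rev_compatible :: "nat \<Rightarrow> (nat \<Rightarrow> 'e list) \<Rightarrow> 'e list \<Rightarrow> bool" where
  "rev_compatible k Fs B \<longleftrightarrow> (\<forall>i<k. path_rev_compatible (Fs i) B)"

end

theory Submission
  imports Defs
begin

lemma split_unique:
  assumes "distinct (u @ x # v)" "u @ x # v = u' @ x # v'"
  shows "u = u' \<and> v = v'"
proof -
  have "distinct (u' @ x # v')" using assms by simp
  then have "x \<notin> set u" "x \<notin> set v" using assms(1) by auto
  then show ?thesis using assms(2) append_Cons_eq_iff[of x u v u' v'] by blast
qed

lemma split_unique_list:
  assumes "distinct X" "X = a @ Q @ b" "X = c @ Q @ d" "Q \<noteq> []"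
  shows "a = c \<and> b = d"
proof -
  obtain q Q' where Q: "Q = q # Q'" using assms(4) by (cases Q) auto
  have e: "a @ q # (Q' @ b) = c @ q # (Q' @ d)" using assms(2,3) Q by simp
  have "distinct (a @ q # (Q' @ b))" using assms(1,2) Q by simp
  then have "a = c \<and> Q' @ b = Q' @ d" using split_unique[OF _ e] by blast
  then show ?thesis by simp
qed

lemma sublist_glue:
  assumes "distinct X" "sublist (x @ [a]) X" "sublist (a # y) X"
  shows "sublist (x @ a # y) X"
proof -
  obtain u v where 1: "X = u @ (x @ [a]) @ v" using assms(2) unfolding sublist_def by blast
  obtain u' v' where 2: "X = u' @ (a # y) @ v'" using assms(3) unfolding sublist_def by blast
  have e: "(u @ x) @ a # v = u' @ a # (y @ v')" using 1 2 by simp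
  have "distinct ((u @ x) @ a # v)" using assms(1) 1 by simp
  then have "u @ x = u' \<and> v = y @ v'" using split_unique[OF _ e] by blast
  then have "X = u @ (x @ a # y) @ v'" using 2 by simp
  then show ?thesis unfolding sublist_def by blast
qed

lemma sublist_prefix_cmp:
  assumes "distinct X" "sublist (a # p) X" "sublist (a # q) X"
  shows "prefix p q \<or> prefix q p"
proof -
  obtain u v where 1: "X = u @ (a # p) @ v" using assms(2) unfolding sublist_def by blast
  obtain u' v' where 2: "X = u' @ (a # q) @ v'" using assms(3) unfolding sublist_def by blast
  have e: "u @ a # (p @ v) = u' @ a # (q @ v')" using 1 2 by simp
  have "distinct (u @ a # (p @ v))" using assms(1) 1 by simp
  then have "p @ v = q @ v'" using split_unique[OF _ e] by blast
  then show ?thesis unfolding append_eq_append_conv2 prefix_def by blast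
qed

lemma sublist_suffix_cmp:
  assumes "distinct X" "sublist (p @ [a]) X" "sublist (q @ [a]) X"
  shows "suffix p q \<or> suffix q p"
proof -
  obtain u v where 1: "X = u @ (p @ [a]) @ v" using assms(2) unfolding sublist_def by blast
  obtain u' v' where 2: "X = u' @ (q @ [a]) @ v'" using assms(3) unfolding sublist_def by blast
  have e: "(u @ p) @ a # v = (u' @ q) @ a # v'" using 1 2 by simp
  have "distinct ((u @ p) @ a # v)" using assms(1) 1 by simp
  then have "u @ p = u' @ q" using split_unique[OF _ e] by blast
  then show ?thesis unfolding append_eq_append_conv2 suffix_def by blast
qed

lemma ob_irrefl:
  assumes "distinct X" "P \<noteq> []"
  shows "\<not> occurs_before X P P"
proof
  assume "occurs_before X P P"
  then obtain u v w where X: "X = u @ P @ v @ P @ w" unfolding occurs_before_def by blast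
  have "hd P \<in> set P" using assms(2) by simp
  then show False using assms(1) X by (simp add: disjoint_iff)
qed

lemma ob_trans:
  assumes "distinct X" "Q \<noteq> []" "occurs_before X P Q" "occurs_before X Q R"
  shows "occurs_before X P R"
proof -
  obtain u v w where 1: "X = u @ P @ v @ Q @ w" using assms(3) unfolding occurs_before_def by blast
  obtain u' v' w' where 2: "X = u' @ Q @ v' @ R @ w'" using assms(4) unfolding occurs_before_def by blast
  have "X = (u @ P @ v) @ Q @ w" "X = u' @ Q @ (v' @ R @ w')" using 1 2 by simp_all
  then have "u @ P @ v = u' \<and> w = v' @ R @ w'" using split_unique_list assms(1,2) by blast
  then have "X = u @ P @ (v @ Q @ v') @ R @ w'" using 1 by simp
  then show ?thesis unfolding occurs_before_def by blast
qed


lemma sublist_avoid: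
  assumes "P \<noteq> []" "Q \<noteq> []" "sublist Q (u @ P @ v)" "set P \<inter> set Q = {}"
  shows "sublist Q u \<or> sublist Q v"
proof -
  have hP: "hd P \<in> set P" using assms(1) by simp
  from assms(3)[unfolded sublist_append[of Q u "P @ v"]]
  consider "sublist Q u" | "sublist Q (P @ v)"
    | xs1 xs2 where "Q = xs1 @ xs2" "suffix xs1 u" "prefix xs2 (P @ v)" by blast
  then show ?thesis
  proof cases
    case 1 then show ?thesis by blast
  next
    case 3
    show ?thesis
    proof (cases "xs2 = []")
      case True
      then have "Q = xs1" using 3(1) by simp
      then have "suffix Q u" using 3(2) by simp
      then obtain zs where "u = zs @ Q" unfolding suffix_def by blast
      then show ?thesis by simp
    next
      case False
      obtain r where r: "P @ v = xs2 @ r" using 3(3) unfolding prefix_def by blast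
      have "hd (P @ v) = hd P" using assms(1) by simp
      moreover have "hd (xs2 @ r) = hd xs2" using False by simp
      ultimately have "hd P = hd xs2" by (simp only: r)
      moreover have "hd xs2 \<in> set Q" unfolding 3(1) using False by simp
      ultimately have "hd P \<in> set P \<inter> set Q" using hP by simp
      then show ?thesis using assms(4) by simp
    qed
  next
    case 2
    from 2[unfolded sublist_append[of Q P v]]
    consider "sublist Q P" | "sublist Q v"
      | xs1 xs2 where "Q = xs1 @ xs2" "suffix xs1 P" "prefix xs2 v" by blast
    then show ?thesis
    proof cases
      case 1
      have "hd Q \<in> set Q" using assms(2) by simp
      then have "hd Q \<in> set P" using set_mono_sublist[OF 1] by blast
      then show ?thesis using \<open>hd Q \<in> set Q\<close> assms(4) by blast
    next
      case 2 then show ?thesis by blast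
    next
      case 3
      show ?thesis
      proof (cases "xs1 = []")
        case True
        then have "prefix Q v" using 3 by simp
        then show ?thesis by blast
      next
        case False
        have "last xs1 \<in> set xs1" using False by simp
        then have "last xs1 \<in> set P" "last xs1 \<in> set Q"
          using set_mono_suffix[OF 3(2)] 3(1) by auto
        then show ?thesis using assms(4) by blast
      qed
    qed
  qed
qed

lemma ob_total:
  assumes "P \<noteq> []" "Q \<noteq> []" "sublist P X" "sublist Q X" "set P \<inter> set Q = {}"
  shows "occurs_before X P Q \<or> occurs_before X Q P"
proof -
  obtain u v where X: "X = u @ P @ v" using assms(3) unfolding sublist_def by blast
  have "sublist Q (u @ P @ v)" using assms(4) X by simp
  then have "sublist Q u \<or> sublist Q v"
    by (rule sublist_avoid[OF assms(1,2) _ assms(5)])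
  then show ?thesis
  proof
    assume "sublist Q u"
    then obtain a b where "u = a @ Q @ b" unfolding sublist_def by blast
    then have "X = a @ Q @ b @ P @ v" using X by simp
    then show ?thesis unfolding occurs_before_def by blast
  next
    assume "sublist Q v"
    then obtain a b where "v = a @ Q @ b" unfolding sublist_def by blast
    then have "X = u @ P @ a @ Q @ b" using X by simp
    then show ?thesis unfolding occurs_before_def by blast
  qed
qed

definition good_set :: "'e list \<Rightarrow> 'e list set \<Rightarrow> bool" where
  "good_set X S \<longleftrightarrow> distinct X \<and> finite S \<and> (\<forall>P\<in>S. P \<noteq> [] \<and> sublist P X)
     \<and> (\<forall>P\<in>S. \<forall>Q\<in>S. P \<noteq> Q \<longrightarrow> set P \<inter> set Q = {})"

lemma sorted_unique:
  assumes irr: "\<forall>x\<in>A. \<not> r x x"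
    and tr: "\<forall>x\<in>A. \<forall>y\<in>A. \<forall>z\<in>A. r x y \<longrightarrow> r y z \<longrightarrow> r x z"
  shows "set xs \<subseteq> A \<Longrightarrow> distinct xs \<Longrightarrow> distinct ys \<Longrightarrow> set ys = set xs \<Longrightarrow>
         sorted_wrt r xs \<Longrightarrow> sorted_wrt r ys \<Longrightarrow> xs = ys"
proof (induction xs arbitrary: ys)
  case Nil then show ?case by simp
next
  case (Cons x xs)
  have "ys \<noteq> []" using Cons.prems(4) by auto
  then obtain y ys' where ys: "ys = y # ys'" by (cases ys) auto
  have "x = y"
  proof (rule ccontr)
    assume ne: "x \<noteq> y"
    have "y \<in> set ys" using ys by simp
    then have "y \<in> set (x # xs)" using Cons.prems(4) by simp
    then have yx: "y \<in> set xs" using ne by simp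
    have "x \<in> set (x # xs)" by simp
    then have "x \<in> set ys" using Cons.prems(4) by simp
    then have xy: "x \<in> set ys'" using ne ys by simp
    have "r x y" using Cons.prems(5) yx by simp
    moreover have "r y x" using Cons.prems(6) xy unfolding ys by simp
    moreover have "x \<in> A" "y \<in> A" using Cons.prems(1) yx by auto
    ultimately have "r x x" using tr by blast
    then show False using irr \<open>x \<in> A\<close> by blast
  qed
  have "xs = ys'"
  proof (rule Cons.IH)
    show "set xs \<subseteq> A" "distinct xs" "sorted_wrt r xs" using Cons.prems(1,2,5) by auto
    show "distinct ys'" "sorted_wrt r ys'" using Cons.prems(3,6) unfolding ys by auto
    have "x \<notin> set xs" using Cons.prems(2) by simp
    have "y \<notin> set ys'" using Cons.prems(3) unfolding ys by simp
    have "set ys' = set ys - {y}" using \<open>y \<notin> set ys'\<close> unfolding ys by auto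
    also have "\<dots> = set (x # xs) - {x}" using Cons.prems(4) \<open>x = y\<close> by simp
    also have "\<dots> = set xs" using \<open>x \<notin> set xs\<close> by auto
    finally show "set ys' = set xs" .
  qed
  then show ?case using ys \<open>x = y\<close> by simp
qed

lemma exists_minimal:
  assumes "finite A" "A \<noteq> {}"
    and "\<And>x. x \<in> A \<Longrightarrow> \<not> r x x"
    and "\<And>x y z. x \<in> A \<Longrightarrow> y \<in> A \<Longrightarrow> z \<in> A \<Longrightarrow> r x y \<Longrightarrow> r y z \<Longrightarrow> r x z"
  shows "\<exists>m\<in>A. \<forall>y\<in>A. \<not> r y m"
  using assms
proof (induction A rule: finite_ne_induct)
  case (singleton x) show ?case using singleton.prems(1)[of x] by simp
next
  case (insert x A)
  have "\<exists>m\<in>A. \<forall>y\<in>A. \<not> r y m"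
  proof (rule insert.IH)
    fix z assume "z \<in> A" then show "\<not> r z z" using insert.prems(1)[of z] by blast
  next
    fix a b c assume "a \<in> A" "b \<in> A" "c \<in> A" "r a b" "r b c"
    then show "r a c" using insert.prems(2)[of a b c] by blast
  qed
  then obtain m where m: "m \<in> A" "\<forall>y\<in>A. \<not> r y m" by blast
  show ?case
  proof (cases "r x m")
    case True
    have "\<forall>y\<in>insert x A. \<not> r y x"
    proof
      fix y assume y: "y \<in> insert x A"
      show "\<not> r y x"
      proof
        assume "r y x"
        show False
        proof (cases "y = x")
          case True
          then show False using \<open>r y x\<close> insert.prems(1)[of x] by simp
        next
          case False
          then have yA: "y \<in> A" using y by simp
          have "r y m" using insert.prems(2)[of y x m] yA m(1) \<open>r x m\<close> \<open>r y x\<close> by simp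
          then show False using m(2) yA by blast
        qed
      qed
    qed
    then show ?thesis by blast
  next
    case False
    then show ?thesis using m by blast
  qed
qed

lemma sorted_exists:
  assumes "finite A"
    and irr: "\<And>x. x \<in> A \<Longrightarrow> \<not> r x x"
    and tr: "\<And>x y z. x \<in> A \<Longrightarrow> y \<in> A \<Longrightarrow> z \<in> A \<Longrightarrow> r x y \<Longrightarrow> r y z \<Longrightarrow> r x z"
    and tot: "\<And>x y. x \<in> A \<Longrightarrow> y \<in> A \<Longrightarrow> x \<noteq> y \<Longrightarrow> r x y \<or> r y x"
  shows "\<exists>xs. distinct xs \<and> set xs = A \<and> sorted_wrt r xs"
  using assms
proof (induction "card A" arbitrary: A)
  case 0
  have "A = {}" using "0.hyps" "0.prems"(1) by simp
  then show ?case by simp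
next
  case (Suc n)
  have ne: "A \<noteq> {}" using Suc.hyps(2) by auto
  obtain m where m: "m \<in> A" "\<forall>y\<in>A. \<not> r y m"
    using exists_minimal[OF Suc.prems(1) ne, of r] Suc.prems(2,3) by blast
  have "\<exists>xs. distinct xs \<and> set xs = A - {m} \<and> sorted_wrt r xs"
  proof (rule Suc.hyps(1))
    show "n = card (A - {m})" using Suc.hyps(2) m by simp
    show "finite (A - {m})" using Suc.prems(1) by simp
    show "\<And>x. x \<in> A - {m} \<Longrightarrow> \<not> r x x" using Suc.prems(2) by blast
    show "\<And>x y z. x \<in> A - {m} \<Longrightarrow> y \<in> A - {m} \<Longrightarrow> z \<in> A - {m} \<Longrightarrow> r x y \<Longrightarrow> r y z \<Longrightarrow> r x z"
    proof -
      fix x y z assume "x \<in> A - {m}" "y \<in> A - {m}" "z \<in> A - {m}" "r x y" "r y z"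
      then show "r x z" using Suc.prems(3)[of x y z] by blast
    qed
    show "\<And>x y. x \<in> A - {m} \<Longrightarrow> y \<in> A - {m} \<Longrightarrow> x \<noteq> y \<Longrightarrow> r x y \<or> r y x"
    proof -
      fix x y assume "x \<in> A - {m}" "y \<in> A - {m}" "x \<noteq> y"
      then show "r x y \<or> r y x" using Suc.prems(4)[of x y] by blast
    qed
  qed
  then obtain xs where xs: "distinct xs" "set xs = A - {m}" "sorted_wrt r xs" by blast
  have "\<forall>y\<in>set xs. r m y"
  proof
    fix y assume "y \<in> set xs"
    then have "y \<in> A" "y \<noteq> m" using xs(2) by auto
    then show "r m y" using Suc.prems(4)[of m y] m by blast
  qed
  then have "distinct (m # xs) \<and> set (m # xs) = A \<and> sorted_wrt r (m # xs)"
    using xs m by auto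
  then show ?case by blast
qed

lemma good_set_irr:
  assumes "good_set X S" "P \<in> S"
  shows "\<not> occurs_before X P P"
  using assms ob_irrefl unfolding good_set_def by metis

lemma good_set_trans:
  assumes "good_set X S" "Q \<in> S" "occurs_before X P Q" "occurs_before X Q R"
  shows "occurs_before X P R"
proof -
  have "distinct X" "Q \<noteq> []" using assms(1,2) unfolding good_set_def by auto
  then show ?thesis using ob_trans assms(3,4) by metis
qed

lemma good_set_total:
  assumes "good_set X S" "P \<in> S" "Q \<in> S" "P \<noteq> Q"
  shows "occurs_before X P Q \<or> occurs_before X Q P"
proof -
  have "P \<noteq> []" "Q \<noteq> []" "sublist P X" "sublist Q X" "set P \<inter> set Q = {}"
    using assms unfolding good_set_def by auto
  then show ?thesis by (rule ob_total)
qed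

lemma order_along_eq:
  assumes "good_set X S" "distinct L" "set L = S" "sorted_wrt (occurs_before X) L"
  shows "order_along X S = L"
  unfolding order_along_def
proof (rule the_equality)
  show "distinct L \<and> set L = S \<and> sorted_wrt (occurs_before X) L" using assms by blast
next
  fix ds assume ds: "distinct ds \<and> set ds = S \<and> sorted_wrt (occurs_before X) ds"
  have irr: "\<forall>x\<in>S. \<not> occurs_before X x x" using good_set_irr[OF assms(1)] by blast
  have tr: "\<forall>x\<in>S. \<forall>y\<in>S. \<forall>z\<in>S. occurs_before X x y \<longrightarrow> occurs_before X y z \<longrightarrow> occurs_before X x z"
    using good_set_trans[OF assms(1)] by blast
  show "ds = L"
    using sorted_unique[OF irr tr, of ds L] ds assms(2,3,4) by simp
qed

lemma order_along_ex:
  assumes "good_set X S"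
  shows "distinct (order_along X S) \<and> set (order_along X S) = S
          \<and> sorted_wrt (occurs_before X) (order_along X S)"
proof -
  have fin: "finite S" using assms unfolding good_set_def by blast
  obtain L where "distinct L" "set L = S" "sorted_wrt (occurs_before X) L"
    using sorted_exists[of S "occurs_before X", OF fin] good_set_irr[OF assms]
      good_set_trans[OF assms] good_set_total[OF assms] by blast
  then show ?thesis using order_along_eq[OF assms] by simp
qed

lemma max_sharedD:
  assumes "P \<in> max_shared_subpaths F B"
  shows "P \<noteq> []" "sublist P F" "sublist P B"
  using assms unfolding max_shared_subpaths_def shared_subpaths_def by auto

lemma max_sharedE:
  assumes "P \<in> max_shared_subpaths F B" "U \<noteq> []" "sublist U F" "sublist U B" "sublist P U"
  shows "U = P"
  using assms unfolding max_shared_subpaths_def shared_subpaths_def by auto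

lemma max_shared_finite: "finite (max_shared_subpaths F B)"
proof -
  have "max_shared_subpaths F B \<subseteq> set (sublists F)"
    using max_sharedD(2) by auto
  then show ?thesis using finite_subset by blast
qed

lemma max_shared_disjoint:
  assumes dF: "distinct F" and dB: "distinct B"
    and P: "P \<in> max_shared_subpaths F B" and Q: "Q \<in> max_shared_subpaths F B"
    and "P \<noteq> Q"
  shows "set P \<inter> set Q = {}"
proof (rule ccontr)
  assume "set P \<inter> set Q \<noteq> {}"
  then obtain a where a: "a \<in> set P" "a \<in> set Q" by blast
  obtain p1 p2 where Pd: "P = p1 @ a # p2" using a(1) by (meson split_list)
  obtain q1 q2 where Qd: "Q = q1 @ a # q2" using a(2) by (meson split_list)
  have sPF: "sublist P F" and sPB: "sublist P B" using max_sharedD[OF P] by auto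
  have sQF: "sublist Q F" and sQB: "sublist Q B" using max_sharedD[OF Q] by auto
  have pre: "\<And>X. sublist P X \<Longrightarrow> sublist (a # p2) X \<and> sublist (p1 @ [a]) X"
  proof -
    fix X assume "sublist P X"
    moreover have "sublist (a # p2) P" "sublist (p1 @ [a]) P" unfolding Pd sublist_def
      by (metis append_Cons append_Nil append_Nil2, metis append.assoc append_Cons append_Nil append_Nil2)
    ultimately show "sublist (a # p2) X \<and> sublist (p1 @ [a]) X"
      using sublist_order.order_trans by blast
  qed
  have preQ: "\<And>X. sublist Q X \<Longrightarrow> sublist (a # q2) X \<and> sublist (q1 @ [a]) X"
  proof -
    fix X assume "sublist Q X"
    moreover have "sublist (a # q2) Q" "sublist (q1 @ [a]) Q" unfolding Qd sublist_def
      by (metis append_Cons append_Nil append_Nil2, metis append.assoc append_Cons append_Nil append_Nil2)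
    ultimately show "sublist (a # q2) X \<and> sublist (q1 @ [a]) X"
      using sublist_order.order_trans by blast
  qed
  have c2: "prefix p2 q2 \<or> prefix q2 p2"
    using sublist_prefix_cmp[OF dF] pre[OF sPF] preQ[OF sQF] by blast
  have c1: "suffix p1 q1 \<or> suffix q1 p1"
    using sublist_suffix_cmp[OF dF] pre[OF sPF] preQ[OF sQF] by blast
  define s2 where "s2 = (if prefix p2 q2 then q2 else p2)"
  define s1 where "s1 = (if suffix p1 q1 then q1 else p1)"
  have s2p: "prefix p2 s2" "prefix q2 s2" using c2 unfolding s2_def by auto
  have s1s: "suffix p1 s1" "suffix q1 s1" using c1 unfolding s1_def by auto
  define U where "U = s1 @ a # s2"
  have U: "\<And>X. distinct X \<Longrightarrow> sublist P X \<Longrightarrow> sublist Q X \<Longrightarrow> sublist U X"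
  proof -
    fix X assume "distinct X" "sublist P X" "sublist Q X"
    have "sublist (s1 @ [a]) X" unfolding s1_def using pre[OF \<open>sublist P X\<close>] preQ[OF \<open>sublist Q X\<close>]
      by simp
    moreover have "sublist (a # s2) X" unfolding s2_def using pre[OF \<open>sublist P X\<close>] preQ[OF \<open>sublist Q X\<close>]
      by simp
    ultimately show "sublist U X" unfolding U_def using sublist_glue[OF \<open>distinct X\<close>] by blast
  qed
  have UF: "sublist U F" using U[OF dF sPF sQF] .
  have UB: "sublist U B" using U[OF dB sPB sQB] .
  have "sublist P U"
  proof -
    obtain x where x: "s1 = x @ p1" using s1s(1) unfolding suffix_def by blast
    obtain y where y: "s2 = p2 @ y" using s2p(1) unfolding prefix_def by blast
    have "U = x @ P @ y" unfolding U_def Pd x y by simp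
    then show ?thesis unfolding sublist_def by blast
  qed
  moreover have "sublist Q U"
  proof -
    obtain x where x: "s1 = x @ q1" using s1s(2) unfolding suffix_def by blast
    obtain y where y: "s2 = q2 @ y" using s2p(2) unfolding prefix_def by blast
    have "U = x @ Q @ y" unfolding U_def Qd x y by simp
    then show ?thesis unfolding sublist_def by blast
  qed
  moreover have "U \<noteq> []" unfolding U_def by simp
  ultimately have "U = P" "U = Q" using max_sharedE[OF P] max_sharedE[OF Q] UF UB by blast+
  then show False using \<open>P \<noteq> Q\<close> by simp
qed

lemma good_set_max:
  assumes "distinct F" "distinct B"
  shows "good_set F (max_shared_subpaths F B)" "good_set B (max_shared_subpaths F B)"
  using assms max_shared_finite max_sharedD max_shared_disjoint unfolding good_set_def
  by blast+

lemma compat_if: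
  assumes dF: "distinct F" and dB: "distinct B"
    and rev: "\<forall>P\<in>max_shared_subpaths F B. \<forall>Q\<in>max_shared_subpaths F B.
               occurs_before F P Q \<longrightarrow> occurs_before B Q P"
  shows "path_rev_compatible F B"
proof -
  define S where "S = max_shared_subpaths F B"
  have gF: "good_set F S" and gB: "good_set B S" using good_set_max[OF dF dB] unfolding S_def by auto
  define L where "L = order_along F S"
  have L: "distinct L" "set L = S" "sorted_wrt (occurs_before F) L"
    using order_along_ex[OF gF] unfolding L_def by auto
  have "sorted_wrt (\<lambda>x y. occurs_before B y x) L"
    by (rule sorted_wrt_mono_rel[OF _ L(3)]) (use rev L(2) S_def in auto)
  then have "sorted_wrt (occurs_before B) (rev L)" by (simp add: sorted_wrt_rev)
  then have LB: "order_along B S = rev L"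
    using order_along_eq[OF gB] L by simp
  have d: "card S = length L" using L distinct_card by fastforce
  show ?thesis unfolding path_rev_compatible_def Let_def S_def[symmetric] L_def[symmetric] LB d
  proof (intro allI impI)
    fix j assume j: "j < length L"
    have "length L - Suc (length L - j - 1) = j" using j by simp
    then show "L ! j = rev L ! (length L - j - 1)"
      using j by (simp add: rev_nth)
  qed
qed

definition nb :: "nat \<Rightarrow> (nat \<Rightarrow> 'e list) \<Rightarrow> 'e \<Rightarrow> 'e \<Rightarrow> bool" where
  "nb k Fs x y \<longleftrightarrow> (\<exists>j<k. sublist [x, y] (Fs j))"

fun brk :: "nat \<Rightarrow> (nat \<Rightarrow> 'e list) \<Rightarrow> 'e list \<Rightarrow> nat" where
  "brk k Fs (x # y # zs) = (if nb k Fs x y then 0 else 1) + brk k Fs (y # zs)"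
| "brk k Fs _ = 0"

lemma brk_append:
  "xs \<noteq> [] \<Longrightarrow> ys \<noteq> [] \<Longrightarrow>
   brk k Fs (xs @ ys) = brk k Fs xs + brk k Fs ys + (if nb k Fs (last xs) (hd ys) then 0 else 1)"
proof (induction xs)
  case Nil then show ?case by simp
next
  case (Cons x xs)
  obtain y ys' where ys: "ys = y # ys'" using Cons.prems(2) by (cases ys) auto
  show ?case
  proof (cases xs)
    case Nil
    then show ?thesis unfolding ys by simp
  next
    case (Cons x' xs'')
    have "brk k Fs ((x # xs) @ ys) = (if nb k Fs x x' then 0 else 1) + brk k Fs (xs @ ys)"
      unfolding Cons by simp
    also have "brk k Fs (xs @ ys) = brk k Fs xs + brk k Fs ys + (if nb k Fs (last xs) (hd ys) then 0 else 1)"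
      using Cons.IH Cons.prems(2) \<open>xs = x' # xs''\<close> by simp
    finally show ?thesis unfolding Cons by simp
  qed
qed

lemma brk_sublist0:
  assumes "j < k"
  shows "sublist L (Fs j) \<Longrightarrow> brk k Fs L = 0"
proof (induction L rule: induct_list012)
  case (3 x y zs)
  have "prefix [x, y] (x # y # zs)" by simp
  then have "sublist [x, y] (x # y # zs)" by (rule prefix_imp_sublist)
  then have "sublist [x, y] (Fs j)" using "3.prems" sublist_order.order_trans by blast
  then have nbxy: "nb k Fs x y" using assms unfolding nb_def by blast
  have "sublist (y # zs) (x # y # zs)" unfolding sublist_Cons_right[of "y # zs" x] by simp
  then have "sublist (y # zs) (Fs j)" using "3.prems" sublist_order.order_trans by blast
  then have "brk k Fs (y # zs) = 0" using "3.IH"(2) by blast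
  then show ?case using nbxy by simp
qed auto

locale fam =
  fixes k :: nat and Fs :: "nat \<Rightarrow> 'e list"
  assumes disj: "\<And>i j. i < k \<Longrightarrow> j < k \<Longrightarrow> i \<noteq> j \<Longrightarrow> set (Fs i) \<inter> set (Fs j) = {}"
    and dist: "\<And>j. j < k \<Longrightarrow> distinct (Fs j)"
begin

lemma same_idx:
  assumes "i < k" "j < k" "x \<in> set (Fs i)" "x \<in> set (Fs j)"
  shows "i = j"
  using disj[OF assms(1,2)] assms(3,4) by blast

lemma brk_chain:
  assumes "j < k"
  shows "brk k Fs L = 0 \<Longrightarrow> L \<noteq> [] \<Longrightarrow> hd L \<in> set (Fs j) \<Longrightarrow> sublist L (Fs j)"
proof (induction L rule: induct_list012)
  case 1 then show ?case by simp
next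
  case (2 x)
  have "x \<in> set (Fs j)" using "2.prems"(3) by simp
  then obtain u v where "Fs j = u @ x # v" by (meson split_list)
  then show ?case unfolding sublist_def by (metis append_Cons append_Nil)
next
  case (3 x y zs)
  have nbxy: "nb k Fs x y" and b0: "brk k Fs (y # zs) = 0"
    using "3.prems"(1) by (simp_all split: if_splits)
  obtain j' where j': "j' < k" "sublist [x, y] (Fs j')" using nbxy unfolding nb_def by blast
  have "x \<in> set (Fs j')" using set_mono_sublist[OF j'(2)] by simp
  moreover have "x \<in> set (Fs j)" using "3.prems"(3) by simp
  ultimately have "j' = j" using same_idx[OF j'(1) assms] by blast
  then have sxy: "sublist ([x] @ [y]) (Fs j)" using j'(2) by simp
  have "y \<in> set (Fs j)" using set_mono_sublist[OF sxy] by simp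
  then have "sublist (y # zs) (Fs j)" using "3.IH"(2) b0 by simp
  then have "sublist ([x] @ y # zs) (Fs j)" using sublist_glue[OF dist[OF assms] sxy] by blast
  then show ?case by simp
qed

lemma brk_delete:
  assumes c: "c \<noteq> []" and nc: "\<And>j. j < k \<Longrightarrow> \<not> sublist c (Fs j)"
  shows "brk k Fs (a @ b) \<le> brk k Fs (a @ c @ b)"
proof (cases "a = []")
  case True
  then show ?thesis
  proof (cases "b = []")
    case True then show ?thesis using \<open>a = []\<close> by simp
  next
    case False then show ?thesis using \<open>a = []\<close> brk_append[OF c False, of k Fs] by simp
  qed
next
  case an: False
  show ?thesis
  proof (cases "b = []")
    case True then show ?thesis using brk_append[OF an c, of k Fs] by simp
  next
    case bn: False
    have e1: "brk k Fs (a @ (c @ b)) = brk k Fs a + brk k Fs (c @ b) + (if nb k Fs (last a) (hd c) then 0 else 1)"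
      using brk_append[OF an, of "c @ b" k Fs] c by simp
    have e2: "brk k Fs (c @ b) = brk k Fs c + brk k Fs b + (if nb k Fs (last c) (hd b) then 0 else 1)"
      using brk_append[OF c bn] by simp
    have e3: "brk k Fs (a @ b) = brk k Fs a + brk k Fs b + (if nb k Fs (last a) (hd b) then 0 else 1)"
      using brk_append[OF an bn] by simp
    have "(if nb k Fs (last a) (hd c) then 0 else 1) + brk k Fs c + (if nb k Fs (last c) (hd b) then 0 else (1::nat)) \<ge> 1"
    proof (rule ccontr)
      assume "\<not> ?thesis"
      then have n1: "nb k Fs (last a) (hd c)" and n2: "brk k Fs c = 0"
        by (simp_all split: if_splits)
      obtain j where j: "j < k" "sublist [last a, hd c] (Fs j)" using n1 unfolding nb_def by blast
      have "hd c \<in> set (Fs j)" using set_mono_sublist[OF j(2)] by simp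
      then have "sublist c (Fs j)" using brk_chain[OF j(1) n2 c] by blast
      then show False using nc[OF j(1)] by blast
    qed
    then show ?thesis using e1 e2 e3 by simp
  qed
qed

end

lemma brk_mid:
  assumes "M \<noteq> []" "M' \<noteq> []" "hd M' = hd M" "last M' = last M" "brk k Fs M' < brk k Fs M"
  shows "brk k Fs (A @ M' @ C) < brk k Fs (A @ M @ C)"
proof -
  have 1: "brk k Fs (M' @ C) < brk k Fs (M @ C)"
  proof (cases "C = []")
    case True then show ?thesis using assms by simp
  next
    case False
    then show ?thesis using brk_append[OF assms(1) False, of k Fs] brk_append[OF assms(2) False, of k Fs]
      assms(4,5) by simp
  qed
  show ?thesis
  proof (cases "A = []")
    case True then show ?thesis using 1 by simp
  next
    case False
    have "M' @ C \<noteq> []" "M @ C \<noteq> []" using assms by auto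
    moreover have "hd (M' @ C) = hd (M @ C)" using assms by simp
    ultimately show ?thesis using brk_append[OF False, of "M' @ C" k Fs] brk_append[OF False, of "M @ C" k Fs]
      1 by simp
  qed
qed

context wf_digraph begin

lemma apath_distinct_arcs: "apath u p v \<Longrightarrow> distinct p"
  unfolding apath_def using distinct_verts_imp_distinct by blast

lemma awlast_ne: "p \<noteq> [] \<Longrightarrow> awlast u p = head G (last p)"
  by (simp add: awalk_verts_conv)

lemma no_cycle_sub:
  assumes "apath x F y" "sublist c F" "c \<noteq> []" "awalk w c w"
  shows False
proof -
  obtain a b where F: "F = a @ c @ b" using assms(2) unfolding sublist_def by blast
  have "apath x (a @ (c @ b)) y" using assms(1) F by simp
  then have "apath (awlast x a) (c @ b) y" using apath_append_iff by blast
  then have ap: "apath (awlast x a) c (awlast (awlast x a) c)" using apath_append_iff by blast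
  then have aw: "awalk (awlast x a) c (awlast (awlast x a) c)" unfolding apath_def by blast
  have "awlast x a = w \<and> awlast (awlast x a) c = w"
    using awalk_ends[OF assms(4) aw] assms(3) by auto
  then have "apath w c w" using ap by metis
  then show False using apath_nonempty_ends assms(3) by blast
qed

lemma shortcut:
  assumes fam: "fam k Fs" and ap: "\<And>j. j < k \<Longrightarrow> \<exists>x y. apath x (Fs j) y"
  shows "awalk u p v \<Longrightarrow> \<exists>q. apath u q v \<and> set q \<subseteq> set p \<and> brk k Fs q \<le> brk k Fs p"
proof (induction "length p" arbitrary: p rule: less_induct)
  case less
  show ?case
  proof (cases "distinct (awalk_verts u p)")
    case True
    then have "apath u p v" using less.prems unfolding apath_def by blast
    then show ?thesis by blast
  next
    case False
    obtain q r s w where d: "p = q @ r @ s" "0 < length r" "awalk u q w" "awalk w r w" "awalk w s v"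
      using awalk_not_distinct_decomp[OF less.prems False] by blast
    have aw: "awalk u (q @ s) v" using awalk_appendI[OF d(3) d(5)] .
    have len: "length (q @ s) < length p" using d(1,2) by simp
    obtain q' where q': "apath u q' v" "set q' \<subseteq> set (q @ s)" "brk k Fs q' \<le> brk k Fs (q @ s)"
      using less.hyps[OF len aw] by blast
    have rne: "r \<noteq> []" using d(2) by auto
    have nc: "\<And>j. j < k \<Longrightarrow> \<not> sublist r (Fs j)"
    proof
      fix j assume j: "j < k" "sublist r (Fs j)"
      obtain x y where "apath x (Fs j) y" using ap[OF j(1)] by blast
      then show False using no_cycle_sub j(2) rne d(4) by blast
    qed
    have "brk k Fs (q @ s) \<le> brk k Fs (q @ r @ s)" using fam.brk_delete[OF fam rne nc] .
    then have "brk k Fs q' \<le> brk k Fs p" using q'(3) d(1) by simp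
    moreover have "set q' \<subseteq> set p" using q'(2) d(1) by auto
    ultimately show ?thesis using q'(1) by blast
  qed
qed

lemma replace:
  assumes fam: "fam k Fs" and apF: "\<And>j. j < k \<Longrightarrow> apath s (Fs j) t" and apB: "apath t B s"
    and i: "i < k" and P: "P \<in> max_shared_subpaths (Fs i) B"
    and obF: "occurs_before (Fs i) P Q" and obB: "occurs_before B P Q" and Qne: "Q \<noteq> []"
  shows "\<exists>B'. apath t B' s \<and> set B' \<subseteq> set B \<union> set (Fs i) \<and> brk k Fs B' < brk k Fs B"
proof -
  obtain F1 F2 F3 where F: "Fs i = F1 @ P @ F2 @ Q @ F3" using obF unfolding occurs_before_def by blast
  obtain B1 B2 B3 where Bd: "B = B1 @ P @ B2 @ Q @ B3" using obB unfolding occurs_before_def by blast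
  have Pne: "P \<noteq> []" using max_sharedD(1)[OF P] .
  have aF: "awalk s (Fs i) t" using apF[OF i] unfolding apath_def by blast
  have aB: "awalk t B s" using apB unfolding apath_def by blast
  define x where "x = head G (last P)"
  obtain q Q' where Qc: "Q = q # Q'" using Qne by (cases Q) auto
  define y where "y = tail G q"
  have eB: "awalk t ((B1 @ P) @ (B2 @ (Q @ B3))) s" using aB Bd by (metis append.assoc)
  have lB: "awlast t (B1 @ P) = x" unfolding x_def using awlast_ne[of "B1 @ P" t] Pne by simp
  have aB1: "awalk t (B1 @ P) x" using awalk_append_iff[THEN iffD1, OF eB] lB by simp
  have aB2: "awalk x (B2 @ (Q @ B3)) s" using awalk_append_iff[THEN iffD1, OF eB] lB by simp
  have aB3: "awalk (awlast x B2) (Q @ B3) s" using awalk_append_iff[THEN iffD1, OF aB2] by simp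
  then have "awlast x B2 = y" unfolding Qc y_def by (simp add: awalk_Cons_iff)
  then have aB3': "awalk y (Q @ B3) s" using aB3 by simp
  have eF: "awalk s ((F1 @ P) @ (F2 @ (Q @ F3))) t" using aF F by (metis append.assoc)
  have lF: "awlast s (F1 @ P) = x" unfolding x_def using awlast_ne[of "F1 @ P" s] Pne by simp
  have aF2: "awalk x (F2 @ (Q @ F3)) t" using awalk_append_iff[THEN iffD1, OF eF] lF by simp
  have aF2a: "awalk x F2 (awlast x F2)" and aF3: "awalk (awlast x F2) (Q @ F3) t"
    using awalk_append_iff[THEN iffD1, OF aF2] by simp_all
  then have "awlast x F2 = y" unfolding Qc y_def by (simp add: awalk_Cons_iff)
  then have aF2': "awalk x F2 y" using aF2a by simp
  define B' where "B' = (B1 @ P) @ F2 @ (Q @ B3)"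
  have aB': "awalk t B' s" unfolding B'_def
    by (rule awalk_appendI[OF aB1 awalk_appendI[OF aF2' aB3']])
  have apj: "\<And>j. j < k \<Longrightarrow> \<exists>x y. apath x (Fs j) y" using apF by blast
  obtain B'' where B'': "apath t B'' s" "set B'' \<subseteq> set B'" "brk k Fs B'' \<le> brk k Fs B'"
    using shortcut[OF fam apj aB'] by blast
  have "set B' \<subseteq> set B \<union> set (Fs i)" unfolding B'_def Bd F by auto
  then have setB'': "set B'' \<subseteq> set B \<union> set (Fs i)" using B''(2) by blast
  define M where "M = P @ B2 @ Q"
  define M' where "M' = P @ F2 @ Q"
  have B'M: "B' = B1 @ M' @ B3" unfolding B'_def M'_def by simp
  have BM: "B = B1 @ M @ B3" unfolding Bd M_def by simp
  have "sublist M' (Fs i)" unfolding F M'_def sublist_def by (metis append.assoc)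
  then have bM': "brk k Fs M' = 0" using brk_sublist0[OF i] by blast
  have dFi: "distinct (Fs i)" using apath_distinct_arcs[OF apF[OF i]] .
  have nnb: "\<not> nb k Fs (last P) (hd (B2 @ Q))"
  proof
    assume "nb k Fs (last P) (hd (B2 @ Q))"
    then obtain j where j: "j < k" "sublist [last P, hd (B2 @ Q)] (Fs j)" unfolding nb_def by blast
    define z where "z = hd (B2 @ Q)"
    define z' where "z' = hd (F2 @ Q)"
    have "last P \<in> set P" using Pne by simp
    moreover have "set P \<subseteq> set (Fs i)" using max_sharedD(2)[OF P] set_mono_sublist by blast
    ultimately have lPi: "last P \<in> set (Fs i)" by blast
    have "last P \<in> set (Fs j)" using set_mono_sublist[OF j(2)] by simp
    then have "j = i" using fam.same_idx[OF fam j(1) i] lPi by blast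
    then have s1: "sublist (last P # [z]) (Fs i)" using j(2) unfolding z_def by simp
    have Pz': "P @ [z'] @ (tl (F2 @ Q) @ F3) = P @ F2 @ Q @ F3" unfolding z'_def using Qne
      by (metis append.assoc append_Cons append_Nil append_is_Nil_conv list.collapse)
    have sPz': "sublist (P @ [z']) (Fs i)" unfolding F sublist_def using Pz'
      by (metis append.assoc)
    have Pbl: "P = butlast P @ [last P]" using Pne by simp
    have "sublist (butlast P @ (last P # [z'])) (Fs i)" using sPz' Pbl
      by (metis append.assoc append_Cons append_Nil)
    then have s2: "sublist (last P # [z']) (Fs i)" using sublist_order.order_trans sublist_append_leftI by blast
    have "prefix [z] [z'] \<or> prefix [z'] [z]" using sublist_prefix_cmp[OF dFi s1 s2] .
    then have "z = z'" by auto
    have Pz: "P @ [z] @ (tl (B2 @ Q) @ B3) = P @ B2 @ Q @ B3" unfolding z_def using Qne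
      by (metis append.assoc append_Cons append_Nil append_is_Nil_conv list.collapse)
    have sPzB: "sublist (P @ [z]) B" unfolding Bd sublist_def using Pz
      by (metis append.assoc)
    have sPzF: "sublist (P @ [z]) (Fs i)" using sPz' \<open>z = z'\<close> by simp
    have "P @ [z] = P" using max_sharedE[OF P _ sPzF sPzB] by simp
    then show False by simp
  qed
  have "brk k Fs M = brk k Fs P + brk k Fs (B2 @ Q) + (if nb k Fs (last P) (hd (B2 @ Q)) then 0 else 1)"
    unfolding M_def using brk_append[OF Pne, of "B2 @ Q" k Fs] Qne by simp
  then have "brk k Fs M' < brk k Fs M" using nnb bM' by simp
  moreover have "M \<noteq> []" "M' \<noteq> []" "hd M' = hd M" "last M' = last M"
    unfolding M_def M'_def using Pne Qne by auto
  ultimately have "brk k Fs B' < brk k Fs B" unfolding B'M BM using brk_mid by blast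
  then have "brk k Fs B'' < brk k Fs B" using B''(3) by simp
  then show ?thesis using B''(1) setB'' by blast
qed

end

lemma wf_copy:
  assumes "wf_digraph G"
  shows "wf_digraph (copy_graph G k)"
proof -
  interpret wf_digraph G by fact
  show ?thesis unfolding copy_graph_def by unfold_locales auto
qed

lemma arcs_copy: "arcs (copy_graph G k) = arcs G \<times> {0..<k}"
  unfolding copy_graph_def by simp

lemma apath_arcs:
  assumes "pre_digraph.apath H u p v"
  shows "set p \<subseteq> arcs H"
  using assms unfolding pre_digraph.apath_def pre_digraph.awalk_def by blast

lemma sol_used_arcs:
  assumes "is_solution G k s t Fs B"
  shows "(\<Union>i<k. set (Fs i)) \<union> set B \<subseteq> arcs G \<times> {0..<k}"
proof -
  have "\<And>i. i < k \<Longrightarrow> set (Fs i) \<subseteq> arcs (copy_graph G k)"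
  proof -
    fix i assume "i < k"
    then have "pre_digraph.apath (copy_graph G k) s (Fs i) t" using assms unfolding is_solution_def by blast
    then show "set (Fs i) \<subseteq> arcs (copy_graph G k)" by (rule apath_arcs)
  qed
  moreover have "set B \<subseteq> arcs (copy_graph G k)"
  proof -
    have "pre_digraph.apath (copy_graph G k) t B s" using assms unfolding is_solution_def by blast
    then show ?thesis by (rule apath_arcs)
  qed
  ultimately show ?thesis unfolding arcs_copy by blast
qed

lemma cost_mono:
  assumes fin: "finite (arcs G)" and nn: "\<forall>e\<in>arcs G. 0 \<le> \<omega> e"
    and sol: "is_solution G k s t Fs B"
    and sub: "set B' \<subseteq> set B \<union> (\<Union>i<k. set (Fs i))"
  shows "sol_cost \<omega> k Fs B' \<le> sol_cost \<omega> k Fs B"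
  unfolding sol_cost_def
proof (rule sum_mono2)
  show "finite ((\<Union>i<k. set (Fs i)) \<union> set B)"
    using sol_used_arcs[OF sol] fin finite_subset by blast
  show "(\<Union>i<k. set (Fs i)) \<union> set B' \<subseteq> (\<Union>i<k. set (Fs i)) \<union> set B" using sub by blast
  fix b assume "b \<in> (\<Union>i<k. set (Fs i)) \<union> set B - ((\<Union>i<k. set (Fs i)) \<union> set B')"
  then have "b \<in> arcs G \<times> {0..<k}" using sol_used_arcs[OF sol] by blast
  then show "0 \<le> \<omega> (fst b)" using nn by auto
qed

theorem lemma2:
  fixes G :: "('a,'b) pre_digraph" and \<omega> :: "'b \<Rightarrow> real" and s t :: 'a and k :: nat
  assumes "fin_digraph G"
    and "s \<in> verts G" and "t \<in> verts G"
    and "k \<ge> 1"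
    and "\<forall>e \<in> arcs G. 0 \<le> \<omega> e"
    and "\<exists>Fs B. is_solution G k s t Fs B"
  shows "\<exists>Fs B. is_solution G k s t Fs B
           \<and> (\<forall>Fs' B'. is_solution G k s t Fs' B' \<longrightarrow> sol_cost \<omega> k Fs B \<le> sol_cost \<omega> k Fs' B')
           \<and> rev_compatible k Fs B"
proof -
  define H where "H = copy_graph G k"
  have wfG: "wf_digraph G" using assms(1) unfolding fin_digraph_def by blast
  have finA: "finite (arcs G)" using assms(1) fin_digraph.finite_arcs by blast
  have wfH: "wf_digraph H" unfolding H_def using wf_copy[OF wfG] .
  define C where "C = {sol_cost \<omega> k Fs B | Fs B. is_solution G k s t Fs B}"
  have "C \<subseteq> (\<lambda>A. \<Sum>a\<in>A. \<omega> (fst a)) ` Pow (arcs G \<times> {0..<k})"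
  proof
    fix c assume "c \<in> C"
    then obtain Fs B where ceq: "c = sol_cost \<omega> k Fs B" and so: "is_solution G k s t Fs B"
      unfolding C_def by blast
    have mem: "(\<Union>i<k. set (Fs i)) \<union> set B \<in> Pow (arcs G \<times> {0..<k})"
      using sol_used_arcs[OF so] by blast
    show "c \<in> (\<lambda>A. \<Sum>a\<in>A. \<omega> (fst a)) ` Pow (arcs G \<times> {0..<k})"
      unfolding ceq sol_cost_def by (rule imageI[OF mem])
  qed
  moreover have "finite (Pow (arcs G \<times> {0..<k}))" using finA by simp
  ultimately have finC: "finite C" by (rule finite_surj[rotated])
  have neC: "C \<noteq> {}" using assms(6) unfolding C_def by blast
  define c0 where "c0 = Min C"
  have "c0 \<in> C" unfolding c0_def using Min_in[OF finC neC] .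
  then obtain Fs B0 where sol0: "is_solution G k s t Fs B0" and c0: "sol_cost \<omega> k Fs B0 = c0"
    unfolding C_def by blast
  have c0min: "\<And>Fs' B'. is_solution G k s t Fs' B' \<Longrightarrow> c0 \<le> sol_cost \<omega> k Fs' B'"
  proof -
    fix Fs' B' assume "is_solution G k s t Fs' B'"
    then have "sol_cost \<omega> k Fs' B' \<in> C" unfolding C_def by blast
    then show "c0 \<le> sol_cost \<omega> k Fs' B'" unfolding c0_def by (rule Min_le[OF finC])
  qed
  define Prop where "Prop = (\<lambda>B. is_solution G k s t Fs B \<and> sol_cost \<omega> k Fs B \<le> c0)"
  have "Prop B0" unfolding Prop_def using sol0 c0 by simp
  then obtain B where PB: "Prop B" and Bmin: "\<And>B'. Prop B' \<Longrightarrow> brk k Fs B \<le> brk k Fs B'"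
    using ex_has_least_nat[of Prop B0 "brk k Fs"] by blast
  have solB: "is_solution G k s t Fs B" and cB: "sol_cost \<omega> k Fs B \<le> c0" using PB unfolding Prop_def by auto
  have apF: "\<And>j. j < k \<Longrightarrow> pre_digraph.apath H s (Fs j) t" using solB unfolding is_solution_def H_def by blast
  have apB: "pre_digraph.apath H t B s" using solB unfolding is_solution_def H_def by blast
  have disjF: "\<And>i j. i < k \<Longrightarrow> j < k \<Longrightarrow> i \<noteq> j \<Longrightarrow> set (Fs i) \<inter> set (Fs j) = {}"
    using solB unfolding is_solution_def by blast
  have distF: "\<And>j. j < k \<Longrightarrow> distinct (Fs j)" using wf_digraph.apath_distinct_arcs[OF wfH apF] .
  have distB: "distinct B" using wf_digraph.apath_distinct_arcs[OF wfH apB] .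
  have fam: "fam k Fs" using disjF distF by unfold_locales
  have "rev_compatible k Fs B"
    unfolding rev_compatible_def
  proof (intro allI impI)
    fix i assume i: "i < k"
    show "path_rev_compatible (Fs i) B"
    proof (rule compat_if[OF distF[OF i] distB])
      show "\<forall>P\<in>max_shared_subpaths (Fs i) B. \<forall>Q\<in>max_shared_subpaths (Fs i) B.
               occurs_before (Fs i) P Q \<longrightarrow> occurs_before B Q P"
      proof (intro ballI impI, rule ccontr)
        fix P Q assume P: "P \<in> max_shared_subpaths (Fs i) B" and Q: "Q \<in> max_shared_subpaths (Fs i) B"
          and obF: "occurs_before (Fs i) P Q" and nob: "\<not> occurs_before B Q P"
        have "P \<noteq> Q"
        proof
          assume "P = Q"
          then show False using ob_irrefl[OF distF[OF i] max_sharedD(1)[OF P]] obF by simp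
        qed
        have disPQ: "set P \<inter> set Q = {}" using max_shared_disjoint[OF distF[OF i] distB P Q \<open>P \<noteq> Q\<close>] .
        have "occurs_before B P Q \<or> occurs_before B Q P"
          using ob_total[OF max_sharedD(1)[OF P] max_sharedD(1)[OF Q] max_sharedD(3)[OF P]
              max_sharedD(3)[OF Q] disPQ] .
        then have obB: "occurs_before B P Q" using nob by blast
        obtain B' where B': "pre_digraph.apath H t B' s" "set B' \<subseteq> set B \<union> set (Fs i)"
          "brk k Fs B' < brk k Fs B"
          using wf_digraph.replace[OF wfH fam apF apB i P obF obB max_sharedD(1)[OF Q]] by blast
        have solB': "is_solution G k s t Fs B'" using solB B'(1) unfolding is_solution_def H_def by blast
        have "set B' \<subseteq> set B \<union> (\<Union>i<k. set (Fs i))" using B'(2) i by blast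
        then have "sol_cost \<omega> k Fs B' \<le> sol_cost \<omega> k Fs B" using cost_mono[OF finA assms(5) solB] by blast
        then have "Prop B'" unfolding Prop_def using solB' cB by simp
        then have "brk k Fs B \<le> brk k Fs B'" using Bmin by blast
        then show False using B'(3) by simp
      qed
    qed
  qed
  moreover have "\<forall>Fs' B'. is_solution G k s t Fs' B' \<longrightarrow> sol_cost \<omega> k Fs B \<le> sol_cost \<omega> k Fs' B'"
    using cB c0min by (meson order_trans)
  ultimately show ?thesis using solB by blast
qed

end
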